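(* Let $1\le K<d$ be integers, $T_\lambda$ as below, $u_\lambda$ the minimal solution in $[1,\infty)$ of $T_\lambda(u)=u$ (which exists for $\lambda$ in a left neighbourhood of $1$), and $h_\lambda(x)=\frac{u_\lambda-T_\lambda(u_\lambda-x)}{x}$. There exist $\tilde\lambda<1$ and $b\in\mathbb N$ (independent of $\lambda$) such that for all $\lambda\in(\tilde\lambda,1)$ the function $h_\lambda$ is decreasing on $[u_\lambda-\lambda^b,u_\lambda]$.
   Context: $T_\lambda(u)=\frac{\lambda}{K}\sum_{j=0}^{K-1}(K-j)\binom{d}{j}u^{d-j}(1-u)^j$ for $u\in[0,\infty)$, $\lambda\in(0,1)$. *)

theory Defs
  imports Complex_Main
begin

definition T :: "nat \<Rightarrow> nat \<Rightarrow> real \<Rightarrow> real \<Rightarrow> real" where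
  "T K d lam u = lam / real K * (\<Sum>j<K. real (K - j) * real (d choose j) * u ^ (d - j) * (1 - u) ^ j)"

definition h :: "nat \<Rightarrow> nat \<Rightarrow> real \<Rightarrow> real \<Rightarrow> real \<Rightarrow> real" where
  "h K d lam ul x = (ul - T K d lam (ul - x)) / x"

end

theory Submission
  imports Defs "HOL-Analysis.Analysis"
begin

definition S :: "nat \<Rightarrow> nat \<Rightarrow> real \<Rightarrow> real" where
  "S n k t = (\<Sum>j<k. real (n choose j) * t ^ (n - j) * (1 - t) ^ j)"

definition W :: "nat \<Rightarrow> nat \<Rightarrow> real \<Rightarrow> real" where
  "W n k t = (\<Sum>j<k. real (k - j) * real (n choose j) * t ^ (n - j) * (1 - t) ^ j)"

lemma S_Suc: "S n (Suc k) t = S n k t + real (n choose k) * t ^ (n - k) * (1 - t) ^ k"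
  by (simp add: S_def)

lemma W_Suc: "W n (Suc k) t = W n k t + S n (Suc k) t"
proof -
  have "W n (Suc k) t = (\<Sum>j<k. real (Suc k - j) * real (n choose j) * t ^ (n - j) * (1 - t) ^ j)
       + real (n choose k) * t ^ (n - k) * (1 - t) ^ k"
    by (simp add: W_def)
  also have "(\<Sum>j<k. real (Suc k - j) * real (n choose j) * t ^ (n - j) * (1 - t) ^ j)
     = (\<Sum>j<k. real (k - j) * real (n choose j) * t ^ (n - j) * (1 - t) ^ j + real (n choose j) * t ^ (n - j) * (1 - t) ^ j)"
    by (rule sum.cong) (auto simp: Suc_diff_le of_nat_Suc algebra_simps)
  finally show ?thesis by (simp add: sum.distrib W_def S_def)
qed

lemma S_deriv_aux:
  "DERIV (S (Suc p + m) (Suc p)) t :> real (Suc p + m) * real ((p + m) choose p) * t ^ m * (1 - t) ^ p"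
proof (induction p arbitrary: m)
  case 0
  have e: "S (Suc m) (Suc 0) = (\<lambda>t. t ^ Suc m)" by (auto simp: S_def)
  have d: "DERIV (\<lambda>t. t ^ Suc m) t :> real (Suc m) * t ^ m"
    using DERIV_pow[of "Suc m" t] by simp
  show ?case using d e by simp
next
  case (Suc p)
  define n where "n = Suc (Suc p) + m"
  have n2: "Suc p + Suc m = n" by (simp add: n_def)
  have IH: "DERIV (S n (Suc p)) t :> real n * real ((p + Suc m) choose p) * t ^ Suc m * (1 - t) ^ p"
    using Suc.IH[of "Suc m"] unfolding n2 .
  have e: "S n (Suc (Suc p)) = (\<lambda>t. S n (Suc p) t + real (n choose Suc p) * t ^ Suc m * (1 - t) ^ Suc p)"
    by (rule ext) (simp add: S_Suc n_def)
  have d2: "DERIV (\<lambda>t. real (n choose Suc p) * t ^ Suc m * (1 - t) ^ Suc p) t :>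
     real (n choose Suc p) * (real (Suc m) * t ^ m * (1 - t) ^ Suc p - t ^ Suc m * (real (Suc p) * (1-t)^p))"
  proof -
    have a1: "DERIV (\<lambda>t. t ^ Suc m) t :> real (Suc m) * t ^ m"
      using DERIV_pow[of "Suc m" t] by simp
    have a2: "DERIV (\<lambda>t. (1 - t) ^ Suc p) t :> real (Suc p) * (1 - t) ^ p * (0 - 1)"
    proof -
      have "DERIV (\<lambda>t. 1 - t) t :> 0 - 1" by (auto intro!: derivative_eq_intros)
      from DERIV_power_Suc[OF this, of p] show ?thesis by (simp add: algebra_simps)
    qed
    from DERIV_cmult[OF DERIV_mult[OF a1 a2], of "real (n choose Suc p)"] show ?thesis
      by (simp add: algebra_simps)
  qed
  have b1: "real (Suc p) * real (n choose Suc p) = real n * real ((p + Suc m) choose p)"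
  proof -
    have "Suc p * (n choose Suc p) = n * ((n - 1) choose p)" by (rule binomial_absorption)
    moreover have "n - 1 = p + Suc m" by (simp add: n_def)
    ultimately show ?thesis by (metis of_nat_mult)
  qed
  have b2: "real (Suc m) * real (n choose Suc p) = real n * real ((Suc p + m) choose Suc p)"
  proof -
    have "(n - Suc p) * (n choose Suc p) = n * ((n - 1) choose Suc p)" by (rule binomial_absorb_comp)
    moreover have "n - 1 = Suc p + m" "n - Suc p = Suc m" by (simp_all add: n_def)
    ultimately show ?thesis by (metis of_nat_mult)
  qed
  have "DERIV (S n (Suc (Suc p))) t :> real n * real ((p + Suc m) choose p) * t ^ Suc m * (1 - t) ^ p
     + real (n choose Suc p) * (real (Suc m) * t ^ m * (1 - t) ^ Suc p - t ^ Suc m * (real (Suc p) * (1-t)^p))"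
    unfolding e by (rule DERIV_add[OF IH d2])
  moreover have "real n * real ((p + Suc m) choose p) * t ^ Suc m * (1 - t) ^ p
     + real (n choose Suc p) * (real (Suc m) * t ^ m * (1 - t) ^ Suc p - t ^ Suc m * (real (Suc p) * (1-t)^p))
     = real n * real ((Suc p + m) choose Suc p) * t ^ m * (1 - t) ^ Suc p"
  proof -
    have "real (n choose Suc p) * (real (Suc m) * t ^ m * (1 - t) ^ Suc p - t ^ Suc m * (real (Suc p) * (1-t)^p))
      = (real (Suc m) * real (n choose Suc p)) * t ^ m * (1 - t) ^ Suc p - (real (Suc p) * real (n choose Suc p)) * t ^ Suc m * (1-t)^p"
      by (simp add: algebra_simps)
    also have "\<dots> = real n * real ((Suc p + m) choose Suc p) * t ^ m * (1 - t) ^ Suc p - real n * real ((p + Suc m) choose p) * t ^ Suc m * (1-t)^p"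
      by (simp only: b1 b2)
    finally show ?thesis by simp
  qed
  ultimately show ?case by (simp add: n_def)
qed

lemma S_deriv:
  assumes "1 \<le> i" "i \<le> n"
  shows "DERIV (S n i) t :> real n * real ((n - 1) choose (i - 1)) * t ^ (n - i) * (1 - t) ^ (i - 1)"
proof -
  obtain p where p: "i = Suc p" using assms by (cases i) auto
  have "\<exists>m. n = Suc p + m" using assms p by presburger
  then obtain m where n: "n = Suc p + m" by blast
  show ?thesis using S_deriv_aux[of p m t] unfolding n p by simp
qed

lemma W_deriv:
  assumes "k \<le> n"
  shows "DERIV (W n k) t :> real n * S (n - 1) k t"
  using assms
proof (induction k)
  case 0
  have e: "W n 0 = (\<lambda>t. 0)" by (auto simp: W_def)
  show ?case by (simp add: e S_def)
next
  case (Suc k)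
  have e: "W n (Suc k) = (\<lambda>t. W n k t + S n (Suc k) t)" by (rule ext) (rule W_Suc)
  have d: "DERIV (W n (Suc k)) t :> real n * S (n - 1) k t + real n * real ((n - 1) choose k) * t ^ (n - Suc k) * (1 - t) ^ k"
    unfolding e using Suc by (intro DERIV_add) (auto intro!: S_deriv[of "Suc k" n, simplified])
  have "n - 1 - k = n - Suc k" by simp
  then show ?case using d by (simp add: S_Suc algebra_simps)
qed

definition Tl :: "nat \<Rightarrow> nat \<Rightarrow> real \<Rightarrow> real" where
  "Tl n k t = (\<Sum>j\<in>{k..n}. real (n choose j) * t ^ (n - j) * (1 - t) ^ j)"

lemma S_Tl:
  assumes "k \<le> n"
  shows "S n k t = 1 - Tl n k t"
proof -
  have "(1::real) = ((1 - t) + t) ^ n" by simp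
  also have "\<dots> = (\<Sum>j\<le>n. real (n choose j) * t ^ (n - j) * (1 - t) ^ j)"
    by (subst binomial_ring) (simp add: algebra_simps)
  also have "{..n} = {..<k} \<union> {k..n}" using assms by auto
  also have "(\<Sum>j\<in>{..<k} \<union> {k..n}. real (n choose j) * t ^ (n - j) * (1 - t) ^ j) = S n k t + Tl n k t"
    unfolding S_def Tl_def by (rule sum.union_disjoint) auto
  finally show ?thesis by simp
qed

lemma Tl_upper:
  assumes "1 \<le> t" "t \<le> 2" "k \<le> n"
  shows "\<bar>Tl n k t\<bar> \<le> real (n + 1) * 4 ^ n * (t - 1) ^ k"
proof -
  have "\<bar>Tl n k t\<bar> \<le> (\<Sum>j\<in>{k..n}. \<bar>real (n choose j) * t ^ (n - j) * (1 - t) ^ j\<bar>)"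
    unfolding Tl_def by (rule sum_abs)
  also have "\<dots> \<le> (\<Sum>j\<in>{k..n}. 4 ^ n * (t - 1) ^ k)"
  proof (rule sum_mono)
    fix j assume j: "j \<in> {k..n}"
    have c: "real (n choose j) \<le> 2 ^ n"
      using binomial_le_pow2[of n j] by (metis of_nat_le_iff of_nat_numeral of_nat_power)
    have p1: "t ^ (n - j) \<le> 2 ^ n"
    proof -
      have "t ^ (n - j) \<le> 2 ^ (n - j)" using assms by (intro power_mono) auto
      also have "\<dots> \<le> 2 ^ n" by (intro power_increasing) auto
      finally show ?thesis .
    qed
    have p2: "\<bar>1 - t\<bar> ^ j \<le> (t - 1) ^ k"
    proof -
      have "\<bar>1 - t\<bar> = t - 1" using assms by simp
      then show ?thesis using assms j by (simp add: power_decreasing)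
    qed
    have "\<bar>real (n choose j) * t ^ (n - j) * (1 - t) ^ j\<bar> = real (n choose j) * t ^ (n - j) * \<bar>1 - t\<bar> ^ j"
      using assms by (simp add: abs_mult power_abs)
    also have "\<dots> \<le> 2 ^ n * 2 ^ n * (t - 1) ^ k"
      using c p1 p2 assms by (intro mult_mono) auto
    also have "(2::real) ^ n * 2 ^ n = 4 ^ n" by (simp add: power_mult_distrib[symmetric])
    finally show "\<bar>real (n choose j) * t ^ (n - j) * (1 - t) ^ j\<bar> \<le> 4 ^ n * (t - 1) ^ k" .
  qed
  also have "\<dots> = real (card {k..n}) * (4 ^ n * (t - 1) ^ k)" by simp
  also have "\<dots> \<le> real (n + 1) * (4 ^ n * (t - 1) ^ k)"
    using assms by (intro mult_right_mono) auto
  finally show ?thesis by simp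
qed

lemma Tl_lower:
  assumes "0 \<le> s" "s \<le> 1" "k \<le> n"
  shows "real (n choose k) * s ^ (n - k) * (1 - s) ^ k \<le> Tl n k s"
  unfolding Tl_def using assms
  by (intro member_le_sum) auto

lemma S_cont: "continuous_on X (S n k)"
  unfolding S_def by (intro continuous_intros)

lemma S_strict_mono:
  assumes "1 \<le> k" "k \<le> n" "0 \<le> a" "a < b" "b \<le> 1"
  shows "S n k a < S n k b"
proof (rule DERIV_pos_imp_increasing_open[OF assms(4)])
  fix x assume x: "a < x" "x < b"
  show "\<exists>y. DERIV (S n k) x :> y \<and> 0 < y"
  proof (intro exI conjI)
    show "DERIV (S n k) x :> real n * real ((n - 1) choose (k - 1)) * x ^ (n - k) * (1 - x) ^ (k - 1)"
      by (rule S_deriv) (use assms in auto)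
    have "0 < real ((n - 1) choose (k - 1))" using assms by simp
    then show "0 < real n * real ((n - 1) choose (k - 1)) * x ^ (n - k) * (1 - x) ^ (k - 1)"
      using assms x by (intro mult_pos_pos) auto
  qed
qed (rule S_cont)

lemma S_mono:
  assumes "1 \<le> k" "k \<le> n" "0 \<le> a" "a \<le> b" "b \<le> 1"
  shows "S n k a \<le> S n k b"
  using S_strict_mono[of k n a b] assms by (cases "a = b") auto

lemma T_W: "T K d lam t = lam / real K * W d K t"
  by (simp add: T_def W_def)

theorem lemma3p6:
  fixes K d :: nat
  assumes "1 \<le> K" and "K < d"
  shows "\<exists>lt::real. 0 < lt \<and> lt < 1 \<and> (\<exists>b::nat. \<forall>lam::real. lt < lam \<and> lam < 1 \<longrightarrow>
           (\<exists>u. 1 \<le> u \<and> T K d lam u = u \<and> (\<forall>v. 1 \<le> v \<and> T K d lam v = v \<longrightarrow> u \<le> v) \<and>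
                (\<forall>x y. u - lam ^ b \<le> x \<and> x < y \<and> y \<le> u \<longrightarrow> h K d lam u y < h K d lam u x)))"
proof -
  define n where "n = d - 1"
  have dn: "d = Suc n" using assms by (simp add: n_def)
  have Kn: "K \<le> n" "1 \<le> K" using assms by (auto simp: n_def)
  define q where "q = real d / real K"
  have q1: "q > 1" using assms by (simp add: q_def)
  define M where "M = real (n + 1) * 4 ^ n"
  have M1: "M \<ge> 1"
  proof -
    have "(1::real) \<le> 4 ^ n" by simp
    moreover have "1 \<le> real (n + 1)" by simp
    ultimately show ?thesis unfolding M_def by (metis mult_mono' mult_1_left zero_le_one)
  qed
  define \<rho> where "\<rho> = (1 + q) / 2"
  have \<rho>1: "\<rho> > 1" using q1 by (simp add: \<rho>_def)
  define \<epsilon>0 where "\<epsilon>0 = min 1 ((q - 1) / (2 * q * M))"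
  have e0: "\<epsilon>0 > 0" "\<epsilon>0 \<le> 1" "\<epsilon>0 \<le> (q - 1) / (2 * q * M)" using q1 M1 by (auto simp: \<epsilon>0_def)
  define c where "c = 2 / (\<rho> - 1)"
  have c0: "c > 0" using \<rho>1 by (simp add: c_def)
  define A where "A = M * 2 ^ n"
  have A1: "A \<ge> 1" using M1 unfolding A_def by (metis mult_mono' mult_1_left one_le_power one_le_numeral zero_le_one)
  define b where "b = nat \<lceil>2 * A * c\<rceil> + 1"
  have bgt: "real b > 2 * A * c" unfolding b_def by linarith
  have b1: "b \<ge> 1" by (simp add: b_def)
  define lt where "lt = max ((1 + \<rho>) / (2 * \<rho>)) (max (1 - \<epsilon>0 / c) (1 - 1 / (2 * real b)))"
  have lt0: "0 < lt"
  proof -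
    have "0 < (1 + \<rho>) / (2 * \<rho>)" using \<rho>1 by simp
    then show ?thesis unfolding lt_def by (simp add: less_max_iff_disj)
  qed
  have lt1: "lt < 1" using \<rho>1 e0 c0 b1 by (simp add: lt_def field_simps)
  show ?thesis
  proof (rule exI[of _ lt], intro conjI)
    show "0 < lt" "lt < 1" by (fact lt0, fact lt1)
    show "\<exists>b::nat. \<forall>lam::real. lt < lam \<and> lam < 1 \<longrightarrow>
           (\<exists>u. 1 \<le> u \<and> T K d lam u = u \<and> (\<forall>v. 1 \<le> v \<and> T K d lam v = v \<longrightarrow> u \<le> v) \<and>
                (\<forall>x y. u - lam ^ b \<le> x \<and> x < y \<and> y \<le> u \<longrightarrow> h K d lam u y < h K d lam u x))"
    proof (rule exI[of _ b], intro allI impI)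
    fix lam :: real assume lam: "lt < lam \<and> lam < 1"
    have lam1: "lam < 1" "lam > 0" using lam lt0 by auto
    have lamr: "lam \<ge> (1 + \<rho>) / (2 * \<rho>)" "lam > 1 - \<epsilon>0 / c" "lam > 1 - 1 / (2 * real b)"
      using lam unfolding lt_def by auto
    define D where "D t = lam * q * S n K t" for t
    have TD: "DERIV (T K d lam) t :> D t" for t
    proof -
      have e: "T K d lam = (\<lambda>t. lam / real K * W d K t)" by (rule ext) (rule T_W)
      have "DERIV (T K d lam) t :> lam / real K * (real d * S (d - 1) K t)"
        unfolding e by (rule DERIV_cmult) (rule W_deriv, use assms in simp)
      then show ?thesis by (simp add: D_def q_def n_def mult.assoc)
    qed
    have Tcont: "continuous_on X (T K d lam)" for X
      unfolding T_def by (intro continuous_intros)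
    have T1: "T K d lam 1 = lam"
    proof -
      have "W d K 1 = (\<Sum>j<K. if j = 0 then real K else 0)"
        unfolding W_def by (rule sum.cong) auto
      also have "\<dots> = real K" using Kn by (simp add: sum.delta)
      finally show ?thesis using Kn by (simp add: T_W)
    qed
    define \<epsilon> where "\<epsilon> = c * (1 - lam)"
    have eps: "0 < \<epsilon>" "\<epsilon> \<le> \<epsilon>0"
    proof -
      show "0 < \<epsilon>" using c0 lam1 by (simp add: \<epsilon>_def)
      have "\<epsilon>0 / c > 1 - lam" using lamr by simp
      then show "\<epsilon> \<le> \<epsilon>0" using c0 by (simp add: \<epsilon>_def field_simps)
    qed
    have Slow: "S n K t \<ge> 1 - M * (t - 1) ^ K" if "1 \<le> t" "t \<le> 2" for t
      using Tl_upper[OF that Kn(1)] S_Tl[OF Kn(1), of t] by (simp add: M_def)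
    have T1e: "T K d lam (1 + \<epsilon>) \<ge> 1 + \<epsilon>"
    proof -
      define \<phi> where "\<phi> = (\<lambda>t. T K d lam t - lam * (1 + \<rho> * (t - 1)))"
      have "\<phi> 1 \<le> \<phi> (1 + \<epsilon>)"
      proof (rule DERIV_nonneg_imp_nondecreasing[of 1 "1 + \<epsilon>" \<phi>])
        show "1 \<le> 1 + \<epsilon>" using eps by simp
        fix t assume t: "1 \<le> t" "t \<le> 1 + \<epsilon>"
        show "\<exists>y. DERIV \<phi> t :> y \<and> 0 \<le> y"
        proof (intro exI conjI)
          show "DERIV \<phi> t :> D t - lam * \<rho>"
            unfolding \<phi>_def using TD[of t] by (auto intro!: derivative_eq_intros)
          have t2: "t \<le> 2" using t eps e0 by simp
          have "(t - 1) ^ K \<le> (t - 1) ^ 1" using t t2 Kn by (intro power_decreasing) auto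
          then have "(t - 1) ^ K \<le> \<epsilon>" using t by simp
          then have "S n K t \<ge> 1 - M * \<epsilon>" using Slow[OF t(1) t2] M1 by (smt (verit) mult_left_mono)
          moreover have "q * (1 - M * \<epsilon>) \<ge> \<rho>"
          proof -
            have "q * M * \<epsilon> \<le> q * M * ((q - 1) / (2 * q * M))"
              using eps e0 q1 M1 by (intro mult_left_mono) auto
            also have "\<dots> = (q - 1) / 2" using q1 M1 by (simp add: field_simps)
            finally have "q * M * \<epsilon> \<le> (q - 1) / 2" .
            then show ?thesis unfolding \<rho>_def by (simp add: right_diff_distrib mult.assoc)
          qed
          ultimately have "q * S n K t \<ge> \<rho>" using q1 by (smt (verit) mult_left_mono)
          then show "0 \<le> D t - lam * \<rho>" using lam1 unfolding D_def
            by (smt (verit) mult.assoc mult_left_mono)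
        qed
      qed
      then have "T K d lam (1 + \<epsilon>) \<ge> lam * (1 + \<rho> * \<epsilon>)" using T1 by (simp add: \<phi>_def)
      moreover have "lam * (1 + \<rho> * \<epsilon>) \<ge> 1 + \<epsilon>"
      proof -
        have "lam * \<rho> - 1 \<ge> (\<rho> - 1) / 2" using lamr(1) \<rho>1 by (simp add: field_simps)
        then have "\<epsilon> * (lam * \<rho> - 1) \<ge> \<epsilon> * ((\<rho> - 1) / 2)" using eps by (intro mult_left_mono) auto
        also have "\<epsilon> * ((\<rho> - 1) / 2) = 1 - lam" using \<rho>1 by (simp add: \<epsilon>_def c_def field_simps)
        finally show ?thesis by (simp add: algebra_simps)
      qed
      ultimately show ?thesis by simp
    qed
    obtain w where w: "1 \<le> w" "w \<le> 1 + \<epsilon>" "T K d lam w - w = 0"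
    proof -
      have "\<exists>x. 1 \<le> x \<and> x \<le> 1 + \<epsilon> \<and> (\<lambda>t. T K d lam t - t) x = 0"
        by (rule IVT') (use T1 lam1 T1e eps in \<open>auto intro!: continuous_intros Tcont\<close>)
      then show ?thesis using that by auto
    qed
    define Z where "Z = {v. 1 \<le> v \<and> T K d lam v = v}"
    have wZ: "w \<in> Z" using w by (simp add: Z_def)
    have Zcl: "closed Z"
    proof -
      have "Z = {v. 1 \<le> v} \<inter> {v. T K d lam v = v}" by (auto simp: Z_def)
      moreover have "closed {v::real. 1 \<le> v}" by (simp add: closed_Collect_le)
      moreover have "closed {v. T K d lam v = v}"
        by (rule closed_Collect_eq) (auto intro: Tcont continuous_intros)
      ultimately show ?thesis by auto
    qed
    have Zbdd: "bdd_below Z" by (rule bdd_belowI[of _ 1]) (auto simp: Z_def)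
    define u where "u = Inf Z"
    have uZ: "u \<in> Z" unfolding u_def using closed_contains_Inf[OF _ Zbdd Zcl] wZ by auto
    have umin: "\<forall>v. 1 \<le> v \<and> T K d lam v = v \<longrightarrow> u \<le> v"
      unfolding u_def using Zbdd by (auto intro: cInf_lower simp: Z_def)
    have uw: "u \<le> w" using umin w by auto
    have u1: "u > 1" using uZ T1 lam1 by (auto simp: Z_def) (metis less_eq_real_def)
    have uT: "T K d lam u = u" using uZ by (simp add: Z_def)
    have ue: "u - 1 \<le> \<epsilon>" using uw w by simp
    have u2: "u \<le> 2" using ue eps e0 by simp
    define s0 where "s0 = lam ^ b"
    have s0h: "s0 > 1 / 2"
    proof -
      have "1 + real b * (lam - 1) \<le> (1 + (lam - 1)) ^ b"
        by (rule Bernoulli_inequality) (use lam1 in simp)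
      moreover have "1 + real b * (lam - 1) > 1 / 2"
        using lamr(3) b1 by (simp add: field_simps)
      ultimately show ?thesis by (simp add: s0_def)
    qed
    have s01: "s0 < 1" unfolding s0_def using lam1 b1 by (simp add: power_less_one_iff)
    define \<delta> where "\<delta> = 1 - s0"
    have \<delta>b: "\<delta> \<ge> (1 - lam) * (real b / 2)"
    proof -
      have "\<delta> = (1 - lam) * (\<Sum>i<b. lam ^ i)" unfolding \<delta>_def s0_def by (rule one_diff_power_eq)
      moreover have "(\<Sum>i<b. lam ^ i) \<ge> (\<Sum>i<b. s0)"
        unfolding s0_def using lam1 by (intro sum_mono power_decreasing) auto
      moreover have "(\<Sum>i<b. s0) \<ge> real b / 2"
      proof -
        have "real b * (1/2) \<le> real b * s0" using s0h by (intro mult_left_mono) auto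
        then show ?thesis by simp
      qed
      ultimately show ?thesis using lam1 by (smt (verit) mult_left_mono)
    qed
    have key: "M * (u - 1) ^ K < real (n choose K) * s0 ^ (n - K) * \<delta> ^ K"
    proof -
      have "A * (u - 1) \<le> A * \<epsilon>" using ue A1 by simp
      also have "\<dots> = (A * c) * (1 - lam)" by (simp add: \<epsilon>_def)
      also have "\<dots> < (real b / 2) * (1 - lam)" using bgt lam1 by (intro mult_strict_right_mono) auto
      also have "\<dots> \<le> \<delta>" using \<delta>b by (simp add: mult.commute)
      finally have "A * (u - 1) < \<delta>" .
      then have "(A * (u - 1)) ^ K < \<delta> ^ K" using A1 u1 Kn by (intro power_strict_mono) auto
      moreover have "A * (u - 1) ^ K \<le> A ^ K * (u - 1) ^ K"
        using A1 u1 Kn by (intro mult_right_mono) (auto simp: power_increasing[of 1 K A, simplified])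
      ultimately have X: "M * (u - 1) ^ K * 2 ^ n < \<delta> ^ K" by (simp add: A_def power_mult_distrib mult_ac)
      have Y: "real (n choose K) * s0 ^ (n - K) * 2 ^ n \<ge> 1"
      proof -
        have f1: "s0 ^ (n - K) \<ge> (1/2) ^ (n - K)" using s0h by (intro power_mono) auto
        have f2: "((1::real)/2) ^ (n - K) \<ge> (1/2) ^ n" by (intro power_decreasing) auto
        have f3: "s0 ^ (n - K) \<ge> (1/2) ^ n" using f1 f2 by linarith
        have f4: "real (n choose K) \<ge> 1"
        proof -
          have "0 < n choose K" using Kn by (simp add: zero_less_binomial_iff)
          then show ?thesis by linarith
        qed
        have "real (n choose K) * s0 ^ (n - K) \<ge> 1 * (1/2) ^ n"
          by (rule mult_mono[OF f4 f3]) auto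
        then show ?thesis by (simp add: power_divide field_simps)
      qed
      have dp: "\<delta> ^ K \<ge> 0" using s01 by (simp add: \<delta>_def)
      have "\<delta> ^ K = 1 * \<delta> ^ K" by simp
      also have "\<dots> \<le> (real (n choose K) * s0 ^ (n - K) * 2 ^ n) * \<delta> ^ K"
        by (rule mult_right_mono[OF Y dp])
      finally have c1: "\<delta> ^ K \<le> (real (n choose K) * s0 ^ (n - K) * 2 ^ n) * \<delta> ^ K" .
      have c2: "(real (n choose K) * s0 ^ (n - K) * 2 ^ n) * \<delta> ^ K = (real (n choose K) * s0 ^ (n - K) * \<delta> ^ K) * 2 ^ n"
        by (simp add: mult_ac)
      have "(M * (u - 1) ^ K) * 2 ^ n < (real (n choose K) * s0 ^ (n - K) * \<delta> ^ K) * 2 ^ n"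
        using X c1 c2 by linarith
      then show ?thesis by (rule mult_right_less_imp_less) simp
    qed
    have N: "u - T K d lam s > D s * (u - s)" if s: "0 \<le> s" "s \<le> s0" for s
    proof -
      have su: "s < u" using s s01 u1 by simp
      obtain \<xi> where xi: "s < \<xi>" "\<xi> < u" "T K d lam u - T K d lam s = (u - s) * D \<xi>"
        using MVT2[OF su, of "T K d lam" D] TD by blast
      have "S n K \<xi> > S n K s"
      proof (cases "\<xi> \<le> 1")
        case True
        then show ?thesis using S_strict_mono[of K n s \<xi>] Kn xi s by simp
      next
        case False
        have "S n K \<xi> \<ge> 1 - M * (\<xi> - 1) ^ K" using Slow[of \<xi>] False xi u2 by simp
        moreover have "(\<xi> - 1) ^ K \<le> (u - 1) ^ K" using False xi by (intro power_mono) auto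
        moreover have "S n K s0 \<le> 1 - real (n choose K) * s0 ^ (n - K) * \<delta> ^ K"
          using S_Tl[OF Kn(1), of s0] Tl_lower[of s0 K n] s0h s01 Kn by (simp add: \<delta>_def)
        moreover have "S n K s \<le> S n K s0" using S_mono[of K n s s0] Kn s s01 by simp
        ultimately show ?thesis using key M1 by (smt (verit) mult_left_mono)
      qed
      then have "D \<xi> > D s" unfolding D_def using lam1 q1 by simp
      then have "(u - s) * D \<xi> > (u - s) * D s" using su by simp
      then show ?thesis using xi uT by (simp add: mult.commute)
    qed
    show "\<exists>u. 1 \<le> u \<and> T K d lam u = u \<and> (\<forall>v. 1 \<le> v \<and> T K d lam v = v \<longrightarrow> u \<le> v) \<and>
                (\<forall>x y. u - lam ^ b \<le> x \<and> x < y \<and> y \<le> u \<longrightarrow> h K d lam u y < h K d lam u x)"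
    proof -
      have hm: "\<forall>x y. u - lam ^ b \<le> x \<and> x < y \<and> y \<le> u \<longrightarrow> h K d lam u y < h K d lam u x"
      proof (intro allI impI)
      fix x y assume xy: "u - lam ^ b \<le> x \<and> x < y \<and> y \<le> u"
      have he: "h K d lam u = (\<lambda>z. (u - T K d lam (u - z)) / z)" by (rule ext) (simp add: h_def)
      show "h K d lam u y < h K d lam u x"
        unfolding he
      proof (rule DERIV_neg_imp_decreasing[of x y "\<lambda>z. (u - T K d lam (u - z)) / z"])
        show "x < y" using xy by simp
        fix z assume z: "x \<le> z" "z \<le> y"
        have zpos: "z > 0" using z xy s01 u1 by (simp add: s0_def)
        have dd: "DERIV (\<lambda>z. u - T K d lam (u - z)) z :> D (u - z)"
        proof -
          have "DERIV (\<lambda>z. T K d lam (u - z)) z :> D (u - z) * (0 - 1)"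
            by (rule DERIV_chain2[OF TD]) (auto intro!: derivative_eq_intros)
          then show ?thesis by (auto intro!: derivative_eq_intros)
        qed
        show "\<exists>y. DERIV (\<lambda>z. (u - T K d lam (u - z)) / z) z :> y \<and> y < 0"
        proof (intro exI conjI)
          show "DERIV (\<lambda>z. (u - T K d lam (u - z)) / z) z :> (D (u - z) * z - (u - T K d lam (u - z)) * 1) / z\<^sup>2"
            using DERIV_quotient[OF dd DERIV_ident] zpos by (simp add: power2_eq_square mult.commute)
          have "u - T K d lam (u - z) > D (u - z) * (u - (u - z))"
            by (rule N) (use z xy in \<open>auto simp: s0_def\<close>)
          then show "(D (u - z) * z - (u - T K d lam (u - z)) * 1) / z\<^sup>2 < 0"
            using zpos by (simp add: divide_neg_pos)
        qed
      qed
      qed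
      show ?thesis using hm u1 uT umin by (intro exI[of _ u]) auto
    qed
  qed
  qed
qed

end
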